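(* Write $e^{\arctan z}=1+\sum_{n=1}^{\infty}a_nz^n$ for $|z|<1$, where $\arctan z=\sum_{k\ge0}\frac{(-1)^kz^{2k+1}}{2k+1}$. Equivalently, $(a_n)$ is the real sequence determined by $a_0=1$, $a_1=1$ and $a_n-(n+1)a_{n+1}-(n-1)a_{n-1}=0$ for $n\ge1$. Then $$\sum_{n=1}^{\infty}a_n^2=1+\frac{1}{2^2}+\frac{1}{6^2}+\frac{7^2}{24^2}+\frac{1}{24^2}+\cdots=\frac{e^{\pi/2}+e^{-\pi/2}}{2}-1.$$ *)

theory Defs
  imports Complex_Main
begin

text \<open>Coefficients of exp(arctan z) = sum a_n z^n, given by the recurrence
  a_0 = 1, a_1 = 1, a_n - (n+1) a_(n+1) - (n-1) a_(n-1) = 0 for n >= 1.\<close>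
fun atan_exp_coeff :: "nat \<Rightarrow> real" where
  "atan_exp_coeff 0 = 1"
| "atan_exp_coeff (Suc 0) = 1"
| "atan_exp_coeff (Suc (Suc n)) =
     (atan_exp_coeff (Suc n) - real n * atan_exp_coeff n) / real (n + 2)"

end

theory Submission
  imports Defs "HOL-Analysis.Analysis"
begin


abbreviation "a \<equiv> atan_exp_coeff"

lemma a_bound: "\<bar>a n\<bar> \<le> 1"
proof (induction n rule: atan_exp_coeff.induct)
  case (3 n)
  have h1: "\<bar>a (Suc n)\<bar> \<le> 1" and h2: "\<bar>a n\<bar> \<le> 1" using 3 by auto
  have "\<bar>real n * a n\<bar> \<le> real n" using h2 by (simp add: abs_mult mult_left_le)
  then have "\<bar>a (Suc n) - real n * a n\<bar> \<le> 1 + real n"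
    using h1 abs_triangle_ineq4[of "a (Suc n)" "real n * a n"] by linarith
  then show ?case by (simp add: abs_divide divide_le_eq)
qed auto

lemma a_rec: "real (n+2) * a (n+2) = a (Suc n) - real n * a n"
  by (simp add: numeral_2_eq_2)

definition A :: "complex fps" where "A = Abs_fps (\<lambda>n. complex_of_real (a n))"

lemma A_nth [simp]: "fps_nth A n = of_real (a n)"
  by (simp add: A_def)

lemma A_radius: "fps_conv_radius A \<ge> 1"
  unfolding fps_conv_radius_def
proof (rule conv_radius_geI_ex')
  fix r :: real assume r: "0 < r" "ereal r < 1"
  hence r1: "r < 1" by simp
  show "summable (\<lambda>n. fps_nth A n * of_real r ^ n)"
  proof (rule summable_comparison_test')
    show "summable (\<lambda>n. r ^ n)" using r r1 by simp
    fix n show "norm (fps_nth A n * of_real r ^ n) \<le> r ^ n"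
      using a_bound[of n] r by (simp add: norm_mult norm_power mult_left_le_one_le)
  qed
qed

lemma A_ode: "fps_deriv A * (1 + fps_X ^ 2) = A"
proof (rule fps_ext)
  fix n
  show "fps_nth (fps_deriv A * (1 + fps_X ^ 2)) n = fps_nth A n"
  proof (cases n)
    case 0 then show ?thesis by (simp add: distrib_left fps_X_power_mult_right_nth)
  next
    case (Suc m)
    show ?thesis
    proof (cases m)
      case 0
      then show ?thesis using Suc by (simp add: distrib_left fps_X_power_mult_right_nth numeral_2_eq_2)
    next
      case (Suc k)
      have "real (k+3) * a (Suc (Suc (Suc k))) = a (Suc (Suc k)) - real (k+1) * a (Suc k)"
        using a_rec[of "k+1"] by (simp add: add.commute del: atan_exp_coeff.simps)
      then have r: "a (Suc k) + (real k * a (Suc k) + (real k * a (Suc (Suc (Suc k))) + 3 * a (Suc (Suc (Suc k))))) = a (Suc (Suc k))"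
        by (simp add: algebra_simps del: atan_exp_coeff.simps)
      have "complex_of_real (a (Suc k) + (real k * a (Suc k) + (real k * a (Suc (Suc (Suc k))) + 3 * a (Suc (Suc (Suc k)))))) = of_real (a (Suc (Suc k)))"
        using r by (simp only:)
      then have e: "complex_of_real (a (Suc k)) + (of_nat k * of_real (a (Suc k)) + (of_nat k * of_real (a (Suc (Suc (Suc k)))) + 3 * of_real (a (Suc (Suc (Suc k)))))) = of_real (a (Suc (Suc k)))"
        by (simp del: atan_exp_coeff.simps)
      show ?thesis using Suc \<open>n = Suc m\<close>
        apply (simp add: distrib_left fps_X_power_mult_right_nth numeral_2_eq_2 del: atan_exp_coeff.simps)
        apply (simp only: mult.assoc[symmetric] fps_X_mult_right_nth)
        using e by (simp add: algebra_simps del: atan_exp_coeff.simps)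
    qed
  qed
qed



lemma A_radius': "norm z < 1 \<Longrightarrow> norm z < fps_conv_radius A"
proof -
  assume "norm z < 1"
  hence "ereal (norm z) < 1" by (simp add: one_ereal_def)
  thus ?thesis using A_radius by (rule less_le_trans)
qed

lemma A_ode_eval:
  assumes z: "norm z < 1"
  shows "eval_fps A z = eval_fps (fps_deriv A) z * (1 + z^2)"
proof -
  have r1: "norm z < fps_conv_radius (fps_deriv A)"
    using A_radius'[OF z] fps_conv_radius_deriv[of A] by (rule less_le_trans)
  have r2: "norm z < fps_conv_radius (1 + fps_X ^ 2 :: complex fps)"
    using fps_conv_radius_add[of "1 :: complex fps" "fps_X ^ 2"] by simp
  have "eval_fps A z = eval_fps (fps_deriv A * (1 + fps_X ^ 2)) z" by (simp add: A_ode)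
  also have "\<dots> = eval_fps (fps_deriv A) z * eval_fps (1 + fps_X ^ 2) z"
    by (rule eval_fps_mult[OF r1 r2])
  also have "eval_fps (1 + fps_X ^ 2) z = 1 + z^2"
    by (subst eval_fps_add) auto
  finally show ?thesis .
qed

lemma P_eq:
  assumes z: "norm z < 1"
  shows "eval_fps A z = exp (Arctan z)"
proof -
  define h where "h w = eval_fps A w * exp (- Arctan w)" for w
  have "\<exists>c. \<forall>w\<in>ball 0 1. h w = c"
  proof (rule has_field_derivative_zero_constant)
    fix w :: complex assume w: "w \<in> ball 0 1"
    hence nw: "norm w < 1" by simp
    have imw: "\<bar>Im w\<bar> < 1" using abs_Im_le_cmod[of w] nw by linarith
    have nz: "1 + w^2 \<noteq> 0"
    proof
      assume "1 + w^2 = 0"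
      hence "w^2 = -1" by (simp add: add_eq_0_iff)
      hence "norm (w^2) = 1" by simp
      hence "norm w = 1" using norm_ge_zero[of w] by (auto simp add: norm_power power2_eq_1_iff)
      with nw show False by simp
    qed
    have d1: "(eval_fps A has_field_derivative eval_fps (fps_deriv A) w) (at w within ball 0 1)"
      by (rule has_field_derivative_eval_fps[OF A_radius'[OF nw]])
    have d2: "((\<lambda>w. exp (- Arctan w)) has_field_derivative exp (- Arctan w) * (- inverse (1 + w^2))) (at w within ball 0 1)"
      by (auto intro!: derivative_eq_intros has_field_derivative_at_within[OF has_field_derivative_Arctan] simp: imw)
    have "(h has_field_derivative eval_fps (fps_deriv A) w * exp (- Arctan w) + exp (- Arctan w) * (- inverse (1 + w^2)) * eval_fps A w) (at w within ball 0 1)"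
      unfolding h_def by (rule DERIV_mult[OF d1 d2])
    moreover have "eval_fps (fps_deriv A) w * exp (- Arctan w) + exp (- Arctan w) * (- inverse (1 + w^2)) * eval_fps A w = 0"
      using A_ode_eval[OF nw] nz by (simp add: field_simps)
    ultimately show "(h has_field_derivative 0) (at w within ball 0 1)" by simp
  qed simp
  then obtain c where c: "\<And>w. w \<in> ball 0 1 \<Longrightarrow> h w = c" by blast
  have "h 0 = 1" by (simp add: h_def eval_fps_at_0)
  hence "c = 1" using c[of 0] by simp
  hence "h z = 1" using c[of z] z by simp
  thus ?thesis by (simp add: h_def exp_minus field_simps)
qed



lemma ddiv: "(D::real) \<noteq> 0 \<Longrightarrow> (p/D)/(q/D) = p/q"
  by (cases "q = 0") (simp_all add: field_simps)

lemma Re_Arctan_formula: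
  assumes z: "norm z < 1"
  shows "Re (Arctan z) = arctan (2 * Re z / (1 - (norm z)^2)) / 2"
proof -
  define x where "x = Re z"
  define y where "y = Im z"
  have nz2: "(norm z)^2 = x^2 + y^2" by (simp add: x_def y_def cmod_power2)
  have lt: "x^2 + y^2 < 1" using z nz2
    by (metis abs_norm_cancel abs_square_less_1)
  define u where "u = 1 - \<i> * z"
  define v where "v = 1 + \<i> * z"
  have ru: "Re u = 1 + y" "Im u = - x" by (simp_all add: u_def x_def y_def)
  have rv: "Re v = 1 - y" "Im v = x" by (simp_all add: v_def x_def y_def)
  have Dpos: "((1-y)^2 + x^2) > 0"
  proof -
    have "\<bar>y\<bar> < 1" using lt by (smt (verit) power2_less_1_iff zero_le_power2)
    thus ?thesis by (smt (verit) zero_le_power2 zero_less_power2)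
  qed
  define w where "w = u / v"
  have rew: "Re w = (1 - x^2 - y^2) / ((1-y)^2 + x^2)"
    unfolding w_def Re_divide by (simp only: ru rv) (simp add: power2_eq_square algebra_simps)
  have imw: "Im w = - 2 * x / ((1-y)^2 + x^2)"
    unfolding w_def Im_divide by (simp only: ru rv) (simp add: power2_eq_square algebra_simps)
  have rwpos: "Re w > 0" using rew Dpos lt by simp
  hence wnz: "w \<noteq> 0" by auto
  have "Im (Ln w) = arctan (Im w / Re w)"
    using Arg_eq_Im_Ln[OF wnz] arg_conv_arctan[OF rwpos] by simp
  also have "Im w / Re w = - (2 * x / (1 - (norm z)^2))"
    unfolding rew imw nz2 using Dpos by (simp add: ddiv)
  finally have IM: "Im (Ln w) = - arctan (2 * x / (1 - (norm z)^2))"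
    by (simp add: arctan_minus)
  have AE: "Arctan z = (\<i>/2) * Ln w"
    by (simp add: Arctan_def w_def u_def v_def)
  have "Re (Arctan z) = - Im (Ln w) / 2" unfolding AE by simp
  then show ?thesis using IM by (simp add: x_def)
qed



lemma cos_int:
  fixes k :: int
  shows "((\<lambda>t. cos (real_of_int k * t)) has_integral (if k = 0 then 2*pi else 0)) {-pi..pi}"
proof (cases "k = 0")
  case True
  then show ?thesis using has_integral_const_real[of "1::real" "-pi" pi] by (simp add: real_scaleR_def)
next
  case False
  have "((\<lambda>t. cos (real_of_int k * t)) has_integral (sin (real_of_int k * pi) / k - sin (real_of_int k * (-pi)) / k)) {-pi..pi}"
  proof (rule fundamental_theorem_of_calculus)
    show "-pi \<le> pi" by simp
    fix t assume "t \<in> {-pi..pi}"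
    show "((\<lambda>t. sin (real_of_int k * t) / k) has_vector_derivative cos (real_of_int k * t)) (at t within {-pi..pi})"
      using False by (auto intro!: derivative_eq_intros simp: has_real_derivative_iff_has_vector_derivative[symmetric])
  qed
  moreover have "sin (real_of_int k * pi) = 0" by (metis mult.commute sin_npi_int)
  ultimately show ?thesis using False by simp
qed

lemma norm_sq_sum:
  fixes c :: "nat \<Rightarrow> real"
  shows "(cmod (\<Sum>n<N. of_real (c n) * cis (real n * t)))^2 =
         (\<Sum>n<N. \<Sum>m<N. c n * c m * cos (real_of_int (int n - int m) * t))"
proof -
  let ?S = "\<Sum>n<N. of_real (c n) * cis (real n * t)"
  have "(cmod ?S)^2 = Re (?S * cnj ?S)"
    by (metis Re_complex_of_real complex_norm_square)
  also have "?S * cnj ?S = (\<Sum>n<N. \<Sum>m<N. (of_real (c n) * cis (real n * t)) * (of_real (c m) * cis (- (real m * t))))"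
    by (simp add: sum_product cis_cnj)
  also have "Re \<dots> = (\<Sum>n<N. \<Sum>m<N. c n * c m * cos (real_of_int (int n - int m) * t))"
    by (simp add: Re_sum cis_mult algebra_simps)
  finally show ?thesis .
qed


lemma parseval:
  assumes r: "0 \<le> r" "r < 1"
  shows "((\<lambda>t. (cmod (eval_fps A (of_real r * cis t)))^2) has_integral
           (2*pi*(\<Sum>n. (a n * r^n)^2))) {-pi..pi}"
proof -
  define c where "c n = a n * r^n" for n
  define f where "f N t = (\<Sum>n<N. \<Sum>m<N. c n * c m * cos (real_of_int (int n - int m) * t))" for N t
  have fint: "(f N has_integral 2*pi*(\<Sum>n<N. (c n)^2)) {-pi..pi}" for N
  proof -
    have "(f N has_integral (\<Sum>n<N. \<Sum>m<N. c n * c m * (if int n - int m = 0 then 2*pi else 0))) {-pi..pi}"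
      unfolding f_def
      by (intro has_integral_sum has_integral_mult_right cos_int finite_lessThan)
    also have "(\<Sum>n<N. \<Sum>m<N. c n * c m * (if int n - int m = 0 then 2*pi else 0)) = (\<Sum>n<N. 2*pi*(c n)^2)"
    proof (rule sum.cong[OF refl])
      fix n assume n: "n \<in> {..<N}"
      have "(\<Sum>m<N. c n * c m * (if int n - int m = 0 then 2*pi else 0)) = (\<Sum>m<N. if m = n then c n * c m * (2*pi) else 0)"
        by (rule sum.cong) auto
      also have "\<dots> = 2*pi*(c n)^2" using n by (simp add: power2_eq_square)
      finally show "(\<Sum>m<N. c n * c m * (if int n - int m = 0 then 2*pi else 0)) = 2*pi*(c n)^2" .
    qed
    also have "\<dots> = 2*pi*(\<Sum>n<N. (c n)^2)" by (simp add: sum_distrib_left)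
    finally show ?thesis .
  qed
  have fS: "f N t = (cmod (\<Sum>n<N. fps_nth A n * (of_real r * cis t)^n))^2" for N t
  proof -
    have "(\<Sum>n<N. fps_nth A n * (of_real r * cis t)^n) = (\<Sum>n<N. of_real (c n) * cis (real n * t))"
      by (simp add: c_def power_mult_distrib Complex.DeMoivre mult.assoc)
    thus ?thesis by (simp add: f_def norm_sq_sum)
  qed
  have nz: "norm (of_real r * cis t :: complex) = r" for t using r by (simp add: norm_mult)
  have conv: "(\<lambda>N. f N t) \<longlonglongrightarrow> (cmod (eval_fps A (of_real r * cis t)))^2" for t
  proof -
    have "norm (of_real r * cis t :: complex) < fps_conv_radius A"
      using A_radius r nz by (metis ereal_less_eq(3) less_ereal.simps(1) less_le_trans one_ereal_def)
    hence "(\<lambda>N. \<Sum>n<N. fps_nth A n * (of_real r * cis t)^n) \<longlonglongrightarrow> eval_fps A (of_real r * cis t)"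
      using sums_eval_fps sums_def by blast
    hence "(\<lambda>N. (cmod (\<Sum>n<N. fps_nth A n * (of_real r * cis t)^n))^2) \<longlonglongrightarrow> (cmod (eval_fps A (of_real r * cis t)))^2"
      by (intro tendsto_intros)
    thus ?thesis by (simp add: fS)
  qed
  have geo: "summable (\<lambda>n. r^n)" using r by simp
  have bound: "norm (f N t) \<le> (1/(1-r))^2" for N t
  proof -
    have "cmod (\<Sum>n<N. fps_nth A n * (of_real r * cis t)^n) \<le> (\<Sum>n<N. cmod (fps_nth A n * (of_real r * cis t)^n))"
      by (rule norm_sum)
    also have "\<dots> \<le> (\<Sum>n<N. r^n)"
    proof (rule sum_mono)
      fix n show "cmod (fps_nth A n * (of_real r * cis t)^n) \<le> r^n"
        using a_bound[of n] r by (simp add: norm_mult norm_power mult_left_le_one_le)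
    qed
    also have "\<dots> \<le> (\<Sum>n. r^n)" using geo r by (intro sum_le_suminf) auto
    also have "\<dots> = 1/(1-r)" using r by (simp add: suminf_geometric)
    finally have "cmod (\<Sum>n<N. fps_nth A n * (of_real r * cis t)^n) \<le> 1/(1-r)" .
    hence "(cmod (\<Sum>n<N. fps_nth A n * (of_real r * cis t)^n))^2 \<le> (1/(1-r))^2"
      by (intro power_mono) auto
    thus ?thesis by (simp add: fS)
  qed
  have hint: "(\<lambda>t. (1/(1-r))^2) integrable_on {-pi..pi}"
    using has_integral_const_real[of "(1/(1-r))^2" "-pi" pi] by blast
  have DC: "(\<lambda>t. (cmod (eval_fps A (of_real r * cis t)))^2) integrable_on {-pi..pi}"
       "(\<lambda>k. integral {-pi..pi} (f k)) \<longlonglongrightarrow> integral {-pi..pi} (\<lambda>t. (cmod (eval_fps A (of_real r * cis t)))^2)"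
    using dominated_convergence[of f "{-pi..pi}" "\<lambda>t. (1/(1-r))^2" "\<lambda>t. (cmod (eval_fps A (of_real r * cis t)))^2"]
      fint hint bound conv by (auto simp: has_integral_integrable)
  have sc: "summable (\<lambda>n. (c n)^2)"
  proof (rule summable_comparison_test')
    show "summable (\<lambda>n. (r^2)^n)" using r by (simp add: power_less_one_iff abs_square_less_1)
    fix n show "norm ((c n)^2) \<le> (r^2)^n"
      using a_bound[of n] r unfolding c_def
      by (simp add: power_mult_distrib abs_square_le_1 power_mult[symmetric] mult.commute mult_left_le_one_le)
  qed
  have ik: "integral {-pi..pi} (f k) = 2*pi*(\<Sum>n<k. (c n)^2)" for k
    using fint integral_unique by blast
  have "(\<lambda>k. integral {-pi..pi} (f k)) \<longlonglongrightarrow> 2*pi*(\<Sum>n. (c n)^2)"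
    unfolding ik by (intro tendsto_mult_left summable_LIMSEQ sc)
  hence "integral {-pi..pi} (\<lambda>t. (cmod (eval_fps A (of_real r * cis t)))^2) = 2*pi*(\<Sum>n. (c n)^2)"
    using DC(2) LIMSEQ_unique by blast
  thus ?thesis using DC(1) unfolding c_def by (metis has_integral_integral)
qed



lemma modsq_eq:
  assumes r: "0 \<le> r" "r < 1"
  shows "(cmod (eval_fps A (of_real r * cis t)))^2 = exp (arctan ((2 * r / (1 - r^2)) * cos t))"
proof -
  let ?z = "of_real r * cis t :: complex"
  have nz: "norm ?z = r" using r by (simp add: norm_mult)
  have rez: "Re ?z = r * cos t" by simp
  have "(cmod (eval_fps A ?z))^2 = (exp (Re (Arctan ?z)))^2"
    using P_eq[of ?z] nz r by simp
  also have "Re (Arctan ?z) = arctan (2 * (r * cos t) / (1 - r^2)) / 2"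
    using Re_Arctan_formula[of ?z] nz rez r by simp
  also have "(exp (arctan (2 * (r * cos t) / (1 - r^2)) / 2))^2 = exp (arctan (2 * (r * cos t) / (1 - r^2)))"
    by (simp add: power2_eq_square exp_add[symmetric])
  also have "2 * (r * cos t) / (1 - r^2) = (2 * r / (1 - r^2)) * cos t" by simp
  finally show ?thesis .
qed

definition rr :: "nat \<Rightarrow> real" where "rr k = real k / real (Suc k)"
definition ss :: "nat \<Rightarrow> real" where "ss k = 2 * rr k / (1 - (rr k)^2)"

lemma rr_bounds: "0 \<le> rr k" "rr k < 1"
  by (auto simp: rr_def field_simps)

lemma ss_ge: "real k \<le> ss k"
proof -
  have p: "(real k + 1)^2 > 0" by simp
  have e1: "1 - (rr k)^2 = (2*real k+1)/(real k+1)^2"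
    unfolding rr_def using p by (simp add: field_simps power2_eq_square)
  have "ss k = 2 * real k * (real k + 1) / (2*real k+1)"
  proof -
    have q: "2*real k+1 > 0" "real k + 1 > 0" by simp_all
    have "ss k = 2 * (real k / (real k + 1)) / ((2*real k+1)/(real k+1)^2)"
      unfolding ss_def e1 by (simp add: rr_def)
    also have "\<dots> = 2 * real k * (real k + 1) / (2*real k+1)"
      using q by (simp add: divide_simps power2_eq_square)
    finally show ?thesis .
  qed
  also have "real k \<le> \<dots>" by (simp add: le_divide_eq algebra_simps)
  finally show ?thesis by simp
qed

lemma ss_lim: "filterlim ss at_top sequentially"
  by (rule filterlim_at_top_mono[OF filterlim_real_sequentially]) (auto simp: ss_ge)


definition LL :: "real \<Rightarrow> real" where
  "LL t = (if cos t > 0 then exp (pi/2) else if cos t < 0 then exp (-(pi/2)) else 1)"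

lemma G_lim: "(\<lambda>k. exp (arctan (ss k * cos t))) \<longlonglongrightarrow> LL t"
proof (cases "cos t > 0")
  case True
  have "filterlim (\<lambda>k. cos t * ss k) at_top sequentially"
    by (rule filterlim_tendsto_pos_mult_at_top[OF tendsto_const True ss_lim])
  hence "(\<lambda>k. arctan (cos t * ss k)) \<longlonglongrightarrow> pi/2"
    by (rule filterlim_compose[OF tendsto_arctan_at_top])
  hence "(\<lambda>k. exp (arctan (cos t * ss k))) \<longlonglongrightarrow> exp (pi/2)"
    by (rule tendsto_exp)
  thus ?thesis using True by (simp add: LL_def mult.commute)
next
  case False
  show ?thesis
  proof (cases "cos t < 0")
    case True
    have "filterlim (\<lambda>k. (- cos t) * ss k) at_top sequentially"
      by (rule filterlim_tendsto_pos_mult_at_top[OF tendsto_const _ ss_lim]) (use True in simp)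
    hence "(\<lambda>k. arctan ((- cos t) * ss k)) \<longlonglongrightarrow> pi/2"
      by (rule filterlim_compose[OF tendsto_arctan_at_top])
    hence "(\<lambda>k. - arctan ((- cos t) * ss k)) \<longlonglongrightarrow> - (pi/2)"
      by (rule tendsto_minus)
    hence "(\<lambda>k. exp (- arctan ((- cos t) * ss k))) \<longlonglongrightarrow> exp (- (pi/2))"
      by (rule tendsto_exp)
    moreover have "- arctan ((- cos t) * ss k) = arctan (ss k * cos t)" for k
      by (simp add: arctan_minus mult.commute)
    ultimately show ?thesis using True by (simp add: LL_def)
  next
    case False2: False
    hence "cos t = 0" using False by simp
    thus ?thesis by (simp add: LL_def)
  qed
qed

lemma LL_int: "(LL has_integral (pi * exp (pi/2) + pi * exp (-(pi/2)))) {-pi..pi}"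
proof -
  have i1: "(LL has_integral (pi/2) * exp (-(pi/2))) {-pi..-(pi/2)}"
  proof (rule has_integral_spike_finite[of "{-(pi/2)}"])
    show "((\<lambda>t. exp (-(pi/2))) has_integral (pi/2) * exp (-(pi/2))) {-pi..-(pi/2)}"
      using has_integral_const_real[of "exp (-(pi/2))" "-pi" "-(pi/2)"] by simp
    fix t assume t: "t \<in> {-pi..-(pi/2)} - {-(pi/2)}"
    hence "cos (-t) < 0" by (intro cos_lt_zero_pi) auto
    thus "LL t = exp (-(pi/2))" by (simp add: LL_def)
  qed auto
  have i2: "(LL has_integral pi * exp (pi/2)) {-(pi/2)..pi/2}"
  proof (rule has_integral_spike_finite[of "{-(pi/2), pi/2}"])
    show "((\<lambda>t. exp (pi/2)) has_integral pi * exp (pi/2)) {-(pi/2)..pi/2}"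
      using has_integral_const_real[of "exp (pi/2)" "-(pi/2)" "pi/2"] by simp
    fix t assume t: "t \<in> {-(pi/2)..pi/2} - {-(pi/2), pi/2}"
    hence "cos t > 0" by (intro cos_gt_zero_pi) auto
    thus "LL t = exp (pi/2)" by (simp add: LL_def)
  qed auto
  have i3: "(LL has_integral (pi/2) * exp (-(pi/2))) {pi/2..pi}"
  proof (rule has_integral_spike_finite[of "{pi/2}"])
    show "((\<lambda>t. exp (-(pi/2))) has_integral (pi/2) * exp (-(pi/2))) {pi/2..pi}"
      using has_integral_const_real[of "exp (-(pi/2))" "pi/2" "pi"] by simp
    fix t assume t: "t \<in> {pi/2..pi} - {pi/2}"
    hence "cos t < 0" by (intro cos_lt_zero_pi) auto
    thus "LL t = exp (-(pi/2))" by (simp add: LL_def)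
  qed auto
  have i12: "(LL has_integral ((pi/2) * exp (-(pi/2)) + pi * exp (pi/2))) {-pi..pi/2}"
    by (rule has_integral_combine[OF _ _ i1 i2]) auto
  have "(LL has_integral ((pi/2) * exp (-(pi/2)) + pi * exp (pi/2) + (pi/2) * exp (-(pi/2)))) {-pi..pi}"
    by (rule has_integral_combine[OF _ _ i12 i3]) auto
  thus ?thesis by (simp add: algebra_simps)
qed



lemma sc_r:
  assumes r: "0 \<le> r" "r < 1"
  shows "summable (\<lambda>n. (a n * r^n)^2)"
proof (rule summable_comparison_test')
  show "summable (\<lambda>n. (r^2)^n)" using r by (simp add: power_less_one_iff abs_square_less_1)
  fix n show "norm ((a n * r^n)^2) \<le> (r^2)^n"
    using a_bound[of n] r
    by (simp add: power_mult_distrib abs_square_le_1 power_mult[symmetric] mult.commute mult_left_le_one_le)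
qed

lemma term_le:
  assumes r: "0 \<le> r" "r < 1"
  shows "(a n * r^n)^2 \<le> (a n)^2"
proof -
  have "(r^n)^2 \<le> 1" using r by (simp add: power_le_one)
  hence "(a n)^2 * (r^n)^2 \<le> (a n)^2 * 1" by (intro mult_left_mono) auto
  thus ?thesis by (simp add: power_mult_distrib)
qed

theorem mainTheorem6:
  shows "(\<lambda>n. (atan_exp_coeff (Suc n))\<^sup>2) sums ((exp (pi / 2) + exp (- (pi / 2))) / 2 - 1)"
proof -
  define C where "C = (exp (pi / 2) + exp (- (pi / 2))) / 2"
  define Sr where "Sr k = (\<Sum>n. (a n * rr k ^ n)^2)" for k
  have Gint: "((\<lambda>t. exp (arctan (ss k * cos t))) has_integral 2*pi*Sr k) {-pi..pi}" for k
    using parseval[OF rr_bounds[of k]] unfolding Sr_def ss_def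
    by (simp only: modsq_eq[OF rr_bounds])
  have bnd: "norm (exp (arctan (ss k * cos t))) \<le> exp (pi/2)" for k t
    using arctan_ubound[of "ss k * cos t"] by simp
  have DC: "(\<lambda>k. integral {-pi..pi} (\<lambda>t. exp (arctan (ss k * cos t)))) \<longlonglongrightarrow> integral {-pi..pi} LL"
    using dominated_convergence(2)[of "\<lambda>k t. exp (arctan (ss k * cos t))" "{-pi..pi}" "\<lambda>t. exp (pi/2)" LL]
      Gint bnd G_lim has_integral_const_real[of "exp (pi/2)" "-pi" pi]
    by (auto simp: has_integral_integrable_integral)
  have "(\<lambda>k. 2*pi*Sr k) \<longlonglongrightarrow> pi * exp (pi/2) + pi * exp (-(pi/2))"
  proof -
    have ik: "integral {-pi..pi} (\<lambda>t. exp (arctan (ss k * cos t))) = 2*pi*Sr k" for k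
      using Gint integral_unique by blast
    show ?thesis using DC LL_int unfolding ik by (simp add: integral_unique)
  qed
  hence "(\<lambda>k. (2*pi*Sr k) / (2*pi)) \<longlonglongrightarrow> (pi * exp (pi/2) + pi * exp (-(pi/2))) / (2*pi)"
    by (rule tendsto_divide[OF _ tendsto_const]) (use pi_gt_zero in auto)
  moreover have "pi * exp (pi/2) + pi * exp (-(pi/2)) = pi * (2*C)" by (simp add: C_def algebra_simps)
  ultimately have "(\<lambda>k. (2*pi*Sr k) / (2*pi)) \<longlonglongrightarrow> C" using pi_gt_zero by simp
  moreover have "(\<lambda>k. (2*pi*Sr k) / (2*pi)) = Sr" using pi_gt_zero by (simp add: fun_eq_iff)
  ultimately have SrC: "Sr \<longlonglongrightarrow> C" by simp
  have rr1: "rr \<longlonglongrightarrow> 1" unfolding rr_def[abs_def] by (rule LIMSEQ_n_over_Suc_n)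
  have part: "(\<Sum>n<N. (a n)^2) \<le> C" for N
  proof -
    have "(\<lambda>k. \<Sum>n<N. (a n * rr k ^ n)^2) \<longlonglongrightarrow> (\<Sum>n<N. (a n * 1 ^ n)^2)"
      by (intro tendsto_intros rr1)
    moreover have "(\<Sum>n<N. (a n * rr k ^ n)^2) \<le> Sr k" for k
      unfolding Sr_def using sc_r[OF rr_bounds[of k]] by (intro sum_le_suminf) auto
    ultimately have "(\<Sum>n<N. (a n * 1 ^ n)^2) \<le> C"
      using SrC by (intro LIMSEQ_le) auto
    thus ?thesis by simp
  qed
  have summ: "summable (\<lambda>n. (a n)^2)"
    by (rule summableI_nonneg_bounded[OF _ part]) simp
  have le1: "(\<Sum>n. (a n)^2) \<le> C" by (rule suminf_le_const[OF summ part])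
  have "Sr k \<le> (\<Sum>n. (a n)^2)" for k
    unfolding Sr_def using sc_r[OF rr_bounds[of k]] summ term_le[OF rr_bounds[of k]]
    by (intro suminf_le) auto
  hence le2: "C \<le> (\<Sum>n. (a n)^2)"
    using SrC by (intro LIMSEQ_le_const2) auto
  have "(\<lambda>n. (a n)^2) sums C" using summ le1 le2 summable_sums by fastforce
  hence "(\<lambda>n. (a n)^2) sums (C - 1 + (a 0)^2)" by simp
  thus ?thesis unfolding C_def by (subst sums_Suc_iff)
qed


end
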